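(* Let $\tilde q=q^2$. For all integers $v\geq 1$ and $L\geq 0$, \[ \sum_{n_1,\ldots,n_v\geq 0} \frac{\tilde q^{\sum_{i=1}^v N_i^2}}{(\tilde q)_{n_1}\cdots(\tilde q)_{n_{v-1}}(\tilde q)_{2n_v}}\cdot\frac{(q^3;q^6)_{n_v}}{(q;q^2)_{n_v}}\cdot\frac{(\tilde q)_{2L}}{(\tilde q)_{L-N_1}} =\sum_{j=-\infty}^{\infty} (-1)^j \left(\frac{j+1}{3}\right) q^{(2v+1)j^2}{2L \brack L+j}_{\tilde q}, \] where $N_i=n_i+n_{i+1}+\cdots+n_v$ for $i=1,\ldots,v$ (for $v=1$ the product $(\tilde q)_{n_1}\cdots(\tilde q)_{n_{v-1}}$ is empty).
   Context: For a variable $a$ and integer $n\ge 0$, $(a;q)_n=(1-a)(1-aq)\cdots(1-aq^{n-1})$, and $(\tilde q)_n=(\tilde q;\tilde q)_n$; by convention $1/(\tilde q)_n=0$ for negative integers $n$. The $q$-binomial coefficient in base $\tilde q$ is ${A \brack B}_{\tilde q}=\frac{(\tilde q;\tilde q)_A}{(\tilde q;\tilde q)_B(\tilde q;\tilde q)_{A-B}}$ if $0\le B\le A$ are integers, and $0$ otherwise. $\left(\frac{j}{3}\right)$ is the Legendre symbol modulo 3: it equals $1$ if $j\equiv 1 \pmod 3$, $-1$ if $j\equiv -1\pmod 3$, and $0$ if $3\mid j$. *)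

theory Defs
  imports "HOL-Analysis.Analysis" "HOL-Number_Theory.Number_Theory"
begin

definition qpoch :: "complex \<Rightarrow> complex \<Rightarrow> nat \<Rightarrow> complex" where
  "qpoch a q n = (\<Prod>k<n. 1 - a * q ^ k)"

definition qinvfac :: "complex \<Rightarrow> int \<Rightarrow> complex" where
  "qinvfac x m = (if m < 0 then 0 else 1 / qpoch x x (nat m))"

definition qbinom :: "complex \<Rightarrow> int \<Rightarrow> int \<Rightarrow> complex" where
  "qbinom x A B = (if 0 \<le> B \<and> B \<le> A
     then qpoch x x (nat A) / (qpoch x x (nat B) * qpoch x x (nat (A - B))) else 0)"

end

theory Submission
  imports Defs
begin

definition ipn :: "complex \<Rightarrow> nat \<Rightarrow> complex" where
  "ipn x n = inverse (qpoch x x n)"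

lemma qpoch_0[simp]: "qpoch a q 0 = 1" by (simp add: qpoch_def)

lemma qpoch_Suc: "qpoch a q (Suc n) = qpoch a q n * (1 - a * q ^ n)"
  by (simp add: qpoch_def)

lemma qpx_Suc: "qpoch x x (Suc n) = qpoch x x n * (1 - x ^ Suc n)"
  by (simp add: qpoch_Suc)

lemma one_minus_pow_nz: "norm x < 1 \<Longrightarrow> n > 0 \<Longrightarrow> 1 - (x::complex) ^ n \<noteq> 0"
proof
  assume a: "norm x < 1" "n > 0" "1 - x ^ n = 0"
  then have "x ^ n = 1" by simp
  then have "norm x ^ n = 1" by (metis norm_one norm_power)
  moreover have "norm x ^ n < 1" using a by (simp add: power_less_one_iff)
  ultimately show False by simp
qed

lemma qpx_nz: "norm x < 1 \<Longrightarrow> qpoch x x n \<noteq> 0"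
proof (induction n)
  case 0 then show ?case by simp
next
  case (Suc n) then show ?case
    using one_minus_pow_nz[of x "Suc n"] by (simp add: qpx_Suc)
qed

lemma ipn_0[simp]: "ipn x 0 = 1" by (simp add: ipn_def)

lemma ipn_Suc: "norm x < 1 \<Longrightarrow> ipn x n = (1 - x ^ Suc n) * ipn x (Suc n)"
  using qpx_nz[of x n] one_minus_pow_nz[of x "Suc n"]
  by (simp add: ipn_def qpx_Suc field_simps)

lemma gen_pascal:
  assumes "norm x < 1"
  shows "(1 - x ^ (a + c + 2)) * ipn x (a + 1) * ipn x (c + 1)
       = ipn x (a + 1) * ipn x c + x ^ (c + 1) * ipn x a * ipn x (c + 1)"
proof -
  have e1: "ipn x a = (1 - x ^ Suc a) * ipn x (Suc a)" using ipn_Suc[OF assms] .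
  have e2: "ipn x c = (1 - x ^ Suc c) * ipn x (Suc c)" using ipn_Suc[OF assms] .
  have pw: "x ^ (a + c + 2) = x ^ (c+1) * x ^ (a+1)"
  proof -
    have "a + c + 2 = (c+1)+(a+1)" by simp
    then show ?thesis by (simp only: power_add)
  qed
  have gen: "(1-C*A)*U*V = U*((1-C)*V) + C*((1-A)*U)*V" for A C U V :: complex
    by (simp add: algebra_simps)
  show ?thesis unfolding e1 e2 pw using gen by simp
qed

lemma Tlem:
  assumes x: "norm x < 1"
  shows "(\<Sum>k\<le>M. x ^ (k * (k + b)) * ipn x k * ipn x (M - k) * ipn x (k + b))
         = ipn x M * ipn x (M + b)"
proof (induction M arbitrary: b)
  case 0 then show ?case by simp
next
  case (Suc M)
  define h1 where "h1 k = (if k \<le> M then x ^ (k * (k + b)) * ipn x k * ipn x (M - k) * ipn x (k + b) else 0)" for k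
  define h2 where "h2 k = (if k = 0 then 0 else x ^ (k * (k + b)) * ipn x (k + b) * x ^ (Suc M - k) * ipn x (k - 1) * ipn x (Suc M - k))" for k
  have key: "(1 - x ^ Suc M) * (x ^ (k * (k + b)) * ipn x k * ipn x (Suc M - k) * ipn x (k + b)) = h1 k + h2 k"
    if k: "k \<le> Suc M" for k
  proof -
    consider "k = 0" | "k = Suc M" | "0 < k \<and> k \<le> M" using k by linarith
    then show ?thesis
    proof cases
      case 1 then show ?thesis using ipn_Suc[OF x, of M] by (simp add: h1_def h2_def)
    next
      case 2 then show ?thesis using ipn_Suc[OF x, of M] by (simp add: h1_def h2_def)
    next
      case 3
      define a where "a = k - 1"
      define c where "c = M - k"
      have ac: "k = a + 1" "M = a + c + 1" using 3 by (auto simp: a_def c_def)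
      have "Suc M = a + c + 2" "Suc M - k = c + 1" "M - k = c" "k - 1 = a" using ac by auto
      then have "(1 - x ^ Suc M) * ipn x k * ipn x (Suc M - k) = ipn x k * ipn x (M - k) + x ^ (Suc M - k) * ipn x (k - 1) * ipn x (Suc M - k)"
        using gen_pascal[OF x, of a c] ac by simp
      then have eq0: "(1 - x ^ Suc M) * ipn x k * ipn x (Suc M - k) = ipn x k * ipn x (M - k) + x ^ (Suc M - k) * ipn x (k - 1) * ipn x (Suc M - k)" .
      have eq1: "(1 - x ^ Suc M) * (x ^ (k * (k + b)) * ipn x k * ipn x (Suc M - k) * ipn x (k + b))
          = x ^ (k * (k + b)) * ipn x (k + b) * ((1 - x ^ Suc M) * ipn x k * ipn x (Suc M - k))"
        by (simp only: mult_ac)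
      have eq: "(1 - x ^ Suc M) * (x ^ (k * (k + b)) * ipn x k * ipn x (Suc M - k) * ipn x (k + b))
          = x ^ (k * (k + b)) * ipn x (k + b) * (ipn x k * ipn x (M - k) + x ^ (Suc M - k) * ipn x (k - 1) * ipn x (Suc M - k))"
        unfolding eq1 eq0 ..
      show ?thesis using 3 unfolding h1_def h2_def eq by (simp add: algebra_simps)
    qed
  qed
  have "(1 - x ^ Suc M) * (\<Sum>k\<le>Suc M. x ^ (k * (k + b)) * ipn x k * ipn x (Suc M - k) * ipn x (k + b))
      = (\<Sum>k\<le>Suc M. h1 k) + (\<Sum>k\<le>Suc M. h2 k)"
    unfolding sum_distrib_left sum.distrib[symmetric] by (rule sum.cong[OF refl]) (use key in simp)
  also have "(\<Sum>k\<le>Suc M. h1 k) = ipn x M * ipn x (M + b)"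
    using Suc.IH[of b] by (simp add: h1_def)
  also have "(\<Sum>k\<le>Suc M. h2 k) = (\<Sum>k\<le>M. x ^ (M + b + 1) * (x ^ (k * (k + (b+1))) * ipn x k * ipn x (M - k) * ipn x (k + (b+1))))"
  proof -
    have "(\<Sum>k\<le>Suc M. h2 k) = (\<Sum>k\<le>M. h2 (Suc k))" by (subst sum.atMost_Suc_shift) (simp add: h2_def)
    also have "\<dots> = (\<Sum>k\<le>M. x ^ (M + b + 1) * (x ^ (k * (k + (b+1))) * ipn x k * ipn x (M - k) * ipn x (k + (b+1))))"
    proof (rule sum.cong[OF refl])
      fix k assume "k \<in> {..M}"
      then have kM: "k \<le> M" by simp
      have "Suc k * (Suc k + b) + (Suc M - Suc k) = (M + b + 1) + k * (k + (b+1))"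
        using kM by (simp add: algebra_simps)
      then have pw: "x ^ (Suc k * (Suc k + b)) * x ^ (Suc M - Suc k) = x ^ (M + b + 1) * x ^ (k * (k + (b+1)))"
        by (metis power_add)
      have A: "h2 (Suc k) = (x ^ (Suc k * (Suc k + b)) * x ^ (Suc M - Suc k)) * (ipn x k * ipn x (M - k) * ipn x (k + (b+1)))"
        unfolding h2_def by (simp add: mult_ac)
      show "h2 (Suc k) = x ^ (M + b + 1) * (x ^ (k * (k + (b+1))) * ipn x k * ipn x (M - k) * ipn x (k + (b+1)))"
        unfolding A pw by (simp only: mult_ac)
    qed
    finally show ?thesis .
  qed
  also have "\<dots> = x ^ (M + b + 1) * (ipn x M * ipn x (M + (b+1)))"
    by (simp only: sum_distrib_left[symmetric] Suc.IH)
  finally have eq: "(1 - x ^ Suc M) * (\<Sum>k\<le>Suc M. x ^ (k * (k + b)) * ipn x k * ipn x (Suc M - k) * ipn x (k + b))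
      = ipn x M * ipn x (M + b) + x ^ (M + b + 1) * (ipn x M * ipn x (M + (b+1)))" .
  have s1: "M + (b+1) = Suc (M+b)" "M + b + 1 = Suc (M+b)" by simp_all
  have gen: "I * ((1 - C) * J) + C * (I * J) = I * J" for I J C :: complex
    by (simp add: algebra_simps)
  have "ipn x M * ipn x (M + b) + x ^ (M + b + 1) * (ipn x M * ipn x (M + (b+1)))
      = ipn x M * ((1 - x ^ Suc (M+b)) * ipn x (Suc (M+b))) + x ^ Suc (M+b) * (ipn x M * ipn x (Suc (M+b)))"
    unfolding s1 using ipn_Suc[OF x, of "M+b"] by simp
  also have "\<dots> = ipn x M * ipn x (Suc (M+b))" by (rule gen)
  also have "\<dots> = (1 - x ^ Suc M) * (ipn x (Suc M) * ipn x (Suc M + b))"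
    using ipn_Suc[OF x, of M] by simp
  finally have "ipn x M * ipn x (M + b) + x ^ (M + b + 1) * (ipn x M * ipn x (M + (b+1)))
      = (1 - x ^ Suc M) * (ipn x (Suc M) * ipn x (Suc M + b))" .
  with eq one_minus_pow_nz[OF x, of "Suc M"] show ?case by simp
qed

lemma qinvfac_nat[simp]: "qinvfac x (int n) = ipn x n"
  by (simp add: qinvfac_def ipn_def divide_inverse)

lemma qinvfac_neg: "m < 0 \<Longrightarrow> qinvfac x m = 0"
  by (simp add: qinvfac_def)

lemma qinvfac_nonneg: "0 \<le> m \<Longrightarrow> qinvfac x m = ipn x (nat m)"
  by (metis nat_0_le qinvfac_nat)

lemma baileyA_nat:
  assumes x: "norm x < 1"
  shows "(\<Sum>m\<le>L. qinvfac x (int L - int m) * x ^ (m^2) * qinvfac x (int m + int r) * qinvfac x (int m - int r))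
       = x ^ (r^2) * qinvfac x (int L + int r) * qinvfac x (int L - int r)"
proof (cases "r \<le> L")
  case False
  then show ?thesis by (simp add: qinvfac_neg)
next
  case True
  define f where "f m = qinvfac x (int L - int m) * x ^ (m^2) * qinvfac x (int m + int r) * qinvfac x (int m - int r)" for m
  have "(\<Sum>m\<le>L. f m) = (\<Sum>m\<in>{r..L}. f m)"
    by (rule sum.mono_neutral_right) (auto simp: f_def qinvfac_neg)
  also have "\<dots> = (\<Sum>k\<in>{0..L-r}. f (k + r))"
    using sum.shift_bounds_cl_nat_ivl[of f 0 r "L-r"] True by simp
  also have "\<dots> = (\<Sum>k\<le>L-r. x ^ (r^2) * (x ^ (k * (k + 2*r)) * ipn x k * ipn x ((L-r) - k) * ipn x (k + 2*r)))"
  proof (rule sum.cong)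
    fix k assume k: "k \<in> {..L-r}"
    have i1: "int L - int (k + r) = int (L - r - k)" using k True by auto
    have i2: "int (k + r) + int r = int (k + 2*r)" by simp
    have i3: "int (k + r) - int r = int k" by simp
    have pw: "x ^ ((k + r)^2) = x ^ (r^2) * x ^ (k * (k + 2*r))"
    proof -
      have "(k + r)^2 = r^2 + k * (k + 2*r)" by (simp add: power2_eq_square algebra_simps)
      then show ?thesis by (simp add: power_add)
    qed
    show "f (k + r) = x ^ (r^2) * (x ^ (k * (k + 2*r)) * ipn x k * ipn x ((L-r) - k) * ipn x (k + 2*r))"
      unfolding f_def i1 i2 i3 pw qinvfac_nat by (simp add: mult_ac)
  qed (simp add: atLeast0AtMost)
  also have "\<dots> = x ^ (r^2) * (ipn x (L - r) * ipn x (L - r + 2*r))"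
    by (simp only: sum_distrib_left[symmetric] Tlem[OF x])
  also have "\<dots> = x ^ (r^2) * qinvfac x (int L + int r) * qinvfac x (int L - int r)"
  proof -
    have "int L + int r = int (L - r + 2*r)" "int L - int r = int (L - r)" using True by auto
    then show ?thesis by (simp only: qinvfac_nat mult_ac)
  qed
  finally show ?thesis unfolding f_def .
qed

lemma baileyA:
  assumes x: "norm x < 1"
  shows "(\<Sum>m\<le>L. qinvfac x (int L - int m) * x ^ (m^2) * qinvfac x (int m + j) * qinvfac x (int m - j))
       = x ^ (nat (j^2)) * qinvfac x (int L + j) * qinvfac x (int L - j)"
proof (cases "j \<ge> 0")
  case True
  then obtain r where r: "j = int r" by (metis nonneg_eq_int)
  have "nat (j^2) = r^2" unfolding r by (simp add: nat_power_eq)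
  then show ?thesis using baileyA_nat[OF x, of L r] unfolding r by simp
next
  case False
  then obtain r where r: "j = - int r" by (metis neg_0_le_iff_le nle_le nonneg_eq_int verit_minus_simplify(4))
  have "nat (j^2) = r^2" unfolding r by (simp add: nat_power_eq)
  then show ?thesis using baileyA_nat[OF x, of L r] unfolding r by (simp add: mult_ac)
qed

fun qb :: "complex \<Rightarrow> nat \<Rightarrow> nat \<Rightarrow> complex" where
  "qb x 0 k = (if k = 0 then 1 else 0)"
| "qb x (Suc n) k = (if k = 0 then 1 else qb x n (k - 1) + x ^ k * qb x n k)"

lemma qb_gt: "n < k \<Longrightarrow> qb x n k = 0"
  by (induction n arbitrary: k) auto

lemma qb_0[simp]: "qb x n 0 = 1"
  by (cases n) auto

lemma qb_Suc_Suc: "qb x (Suc n) (Suc k) = qb x n k + x ^ Suc k * qb x n (Suc k)"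
  by simp

lemma qb_formula: "k \<le> n \<Longrightarrow> qb x n k * qpoch x x k * qpoch x x (n - k) = qpoch x x n"
proof (induction n arbitrary: k)
  case 0 then show ?case by simp
next
  case (Suc n)
  show ?case
  proof (cases k)
    case 0 then show ?thesis by simp
  next
    case (Suc j)
    have t1: "qb x n j * qpoch x x (Suc j) * qpoch x x (Suc n - Suc j) = qpoch x x n * (1 - x ^ Suc j)"
    proof -
      have "j \<le> n" using Suc.prems Suc by simp
      then have "qb x n j * qpoch x x j * qpoch x x (n - j) = qpoch x x n" using Suc.IH by simp
      then show ?thesis by (simp add: qpx_Suc mult_ac)
    qed
    have t2: "x ^ Suc j * qb x n (Suc j) * qpoch x x (Suc j) * qpoch x x (Suc n - Suc j)
        = x ^ Suc j * qpoch x x n * (1 - x ^ (Suc n - Suc j))"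
    proof (cases "Suc j \<le> n")
      case True
      then have "qb x n (Suc j) * qpoch x x (Suc j) * qpoch x x (n - Suc j) = qpoch x x n" using Suc.IH by simp
      moreover have "Suc n - Suc j = Suc (n - Suc j)" using True by simp
      ultimately show ?thesis by (simp add: qpx_Suc mult_ac)
    next
      case False
      then have "Suc j = Suc n" using Suc.prems Suc by simp
      then show ?thesis by (simp add: qb_gt)
    qed
    have "qb x (Suc n) k * qpoch x x k * qpoch x x (Suc n - k)
        = qb x n j * qpoch x x (Suc j) * qpoch x x (Suc n - Suc j)
          + x ^ Suc j * qb x n (Suc j) * qpoch x x (Suc j) * qpoch x x (Suc n - Suc j)"
      unfolding Suc by (simp add: algebra_simps)
    also have "\<dots> = qpoch x x n * (1 - x ^ Suc j) + x ^ Suc j * qpoch x x n * (1 - x ^ (Suc n - Suc j))"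
      using t1 t2 by simp
    also have "\<dots> = qpoch x x n * (1 - x ^ Suc j * x ^ (Suc n - Suc j))"
      by (simp add: algebra_simps)
    also have "x ^ Suc j * x ^ (Suc n - Suc j) = x ^ Suc n"
      using Suc.prems Suc by (simp add: power_add[symmetric])
    finally show ?thesis by (simp add: qpx_Suc)
  qed
qed

lemma qb_ipn: "norm x < 1 \<Longrightarrow> k \<le> n \<Longrightarrow> qb x n k = qpoch x x n * ipn x k * ipn x (n - k)"
  using qb_formula[of k n x] qpx_nz[of x k] qpx_nz[of x "n-k"]
  by (simp add: ipn_def field_simps)

lemma kk_aux: "k * (k - 1) + 2 * k = Suc k * k"
  by (cases k) simp_all

lemma HB:
  fixes q y z :: complex
  shows "(\<Prod>i<n. y - z * q ^ (2*i))
       = (\<Sum>k\<le>n. qb (q^2) n k * (-1)^k * q ^ (k * (k - 1)) * z ^ k * y ^ (n - k))"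
proof (induction n arbitrary: z)
  case 0 then show ?case by simp
next
  case (Suc n)
  define S where "S = (\<Sum>k\<le>n. qb (q^2) n k * (-1)^k * q ^ (k * (k - 1)) * (z * q^2) ^ k * y ^ (n - k))"
  have IH: "(\<Prod>i<n. y - (z * q^2) * q ^ (2*i)) = S" unfolding S_def by (rule Suc.IH)
  have "(\<Prod>i<Suc n. y - z * q ^ (2*i)) = (y - z) * (\<Prod>i<n. y - (z * q^2) * q ^ (2*i))"
    by (subst prod.lessThan_Suc_shift) (simp add: power_add power2_eq_square mult_ac)
  also have "\<dots> = y * S - z * S" unfolding IH by (simp add: algebra_simps)
  finally have L: "(\<Prod>i<Suc n. y - z * q ^ (2*i)) = y * S - z * S" .
  define h where "h k = qb (q^2) n k * (-1)^k * q ^ (k * (k - 1)) * (z * q^2) ^ k * y ^ (Suc n - k)" for k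
  define m where "m k = qb (q^2) n k * (-1)^(Suc k) * q ^ (Suc k * k) * z ^ Suc k * y ^ (n - k)" for k
  define t where "t k = (q^2) ^ Suc k * qb (q^2) n (Suc k) * (-1)^(Suc k) * q ^ (Suc k * k) * z ^ Suc k * y ^ (n - k)" for k
  have yS: "y * S = (\<Sum>k\<le>n. h k)"
    unfolding S_def sum_distrib_left
  proof (rule sum.cong[OF refl])
    fix k assume "k \<in> {..n}"
    then have yy: "y ^ (Suc n - k) = y * y ^ (n - k)" by (simp add: Suc_diff_le)
    show "y * (qb (q\<^sup>2) n k * (- 1) ^ k * q ^ (k * (k - 1)) * (z * q\<^sup>2) ^ k * y ^ (n - k)) = h k"
      unfolding h_def yy by (simp only: mult_ac)
  qed
  have hsum: "(\<Sum>k\<le>n. h k) = h 0 + (\<Sum>k\<le>n. t k)"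
  proof -
    have "(\<Sum>k\<le>Suc n. h k) = h 0 + (\<Sum>k\<le>n. h (Suc k))" by (rule sum.atMost_Suc_shift)
    moreover have "(\<Sum>k\<le>Suc n. h k) = (\<Sum>k\<le>n. h k)" by (simp add: h_def qb_gt)
    moreover have "h (Suc k) = t k" for k
    proof -
      have pz: "(z * q^2) ^ Suc k = (q^2) ^ Suc k * z ^ Suc k" by (simp add: power_mult_distrib)
      show ?thesis unfolding h_def t_def pz diff_Suc_Suc diff_Suc_1 by (simp add: ac_simps)
    qed
    ultimately show ?thesis by simp
  qed
  have zS: "z * S = - (\<Sum>k\<le>n. m k)"
    unfolding S_def sum_distrib_left sum_negf[symmetric]
  proof (rule sum.cong[OF refl])
    fix k assume "k \<in> {..n}"
    have pz: "(z * q^2) ^ k = z ^ k * q ^ (2 * k)" by (simp add: power_mult_distrib power_mult)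
    have pq: "q ^ (k * (k - 1)) * q ^ (2 * k) = q ^ (Suc k * k)"
      by (simp only: power_add[symmetric] kk_aux)
    have "z * (qb (q\<^sup>2) n k * (- 1) ^ k * q ^ (k * (k - 1)) * (z * q\<^sup>2) ^ k * y ^ (n - k))
        = - (qb (q\<^sup>2) n k * (- 1) ^ Suc k * (q ^ (k * (k - 1)) * q ^ (2 * k)) * (z * z ^ k) * y ^ (n - k))"
      unfolding pz by (simp add: mult_ac)
    also have "\<dots> = - m k" unfolding pq m_def by (simp only: power_Suc)
    finally show "z * (qb (q\<^sup>2) n k * (- 1) ^ k * q ^ (k * (k - 1)) * (z * q\<^sup>2) ^ k * y ^ (n - k)) = - m k" .
  qed
  have R: "(\<Sum>k\<le>Suc n. qb (q^2) (Suc n) k * (-1)^k * q ^ (k * (k - 1)) * z ^ k * y ^ (Suc n - k))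
      = y ^ Suc n + (\<Sum>k\<le>n. m k + t k)"
    by (subst sum.atMost_Suc_shift) (simp add: m_def t_def algebra_simps)
  have "h 0 = y ^ Suc n" by (simp add: h_def)
  show ?case unfolding L R yS hsum zS sum.distrib using \<open>h 0 = y ^ Suc n\<close> by simp
qed

lemma prod_split_add: "(\<Prod>i<a+b. f i) = (\<Prod>i<a. f i) * (\<Prod>i<b. f (a + i))" for b :: nat
  by (induction b) (simp_all add: mult_ac)

lemma sum_two_i: "(\<Sum>i<L. 2 * (L - 1 - i)) = L * (L - 1::nat)"
proof -
  have "(\<Sum>i<L. 2 * (L - 1 - i)) = (\<Sum>i<L. 2 * i)"
    using sum.nat_diff_reindex[of "\<lambda>i. 2 * i" L] by simp
  also have "\<dots> = L * (L - 1)"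
  proof (induction L)
    case (Suc L) then show ?case by (cases L) (auto simp: algebra_simps)
  qed simp
  finally show ?thesis .
qed

lemma exp_id:
  assumes "k \<le> 2 * l + 2"
  shows "k * (k - 1) + (2*l+1) * (2*l+2-k) = nat ((int k - int (l+1))^2) + (l+1)*(3*l+1)"
proof -
  have a: "int (k * (k - 1)) = int k * (int k - 1)" by (cases k) (auto simp: algebra_simps)
  have b0: "int (2*l+2-k) = 2*int l+2-int k" using assms by linarith
  have b: "int ((2*l+1) * (2*l+2-k)) = (2*int l+1) * (2*int l+2-int k)" unfolding of_nat_mult b0 by simp
  have c: "int (nat ((int k - int (l+1))^2)) = (int k - int (l+1))^2" by simp
  have d1: "int (k * (k - 1) + (2*l+1) * (2*l+2-k)) = int k * (int k - 1) + (2*int l+1) * (2*int l+2-int k)"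
    by (simp only: of_nat_add a b)
  have d2: "int (nat ((int k - int (l+1))^2) + (l+1)*(3*l+1)) = (int k - int (l+1))^2 + (int l+1)*(3*int l+1)"
    by (simp only: of_nat_add c) (simp add: algebra_simps)
  have "int (k * (k - 1) + (2*l+1) * (2*l+2-k)) = int (nat ((int k - int (l+1))^2) + (l+1)*(3*l+1))"
    unfolding d1 d2 by (simp add: power2_eq_square algebra_simps)
  then show ?thesis by (simp only: of_nat_eq_iff)
qed

lemma qb_zero_base: "k \<le> n \<Longrightarrow> qb 0 n k = 1"
proof (induction n arbitrary: k)
  case (Suc n) then show ?case by (cases k) (auto simp: qb_gt)
qed simp

lemma TP:
  fixes q w :: complex
  shows "(\<Sum>k\<le>2*L. (-1)^k * q ^ (nat ((int k - int L)^2)) * w ^ k * qb (q^2) (2*L) k)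
       = (\<Prod>i<L. (1 - w * q^(2*i+1)) * (q^(2*i+1) - w))"
proof (cases "q = 0")
  case True
  have "(\<Sum>k\<le>2*L. (-1)^k * q ^ (nat ((int k - int L)^2)) * w ^ k * qb (q^2) (2*L) k)
      = (\<Sum>k\<le>2*L. if k = L then (-1)^L * w ^ L else 0)"
  proof (rule sum.cong[OF refl])
    fix k assume k: "k \<in> {..2*L}"
    show "(-1)^k * q ^ (nat ((int k - int L)^2)) * w ^ k * qb (q^2) (2*L) k = (if k = L then (-1)^L * w ^ L else 0)"
    proof (cases "k = L")
      case True then show ?thesis using \<open>q = 0\<close> by (simp add: qb_zero_base)
    next
      case False
      then have "nat ((int k - int L)^2) \<noteq> 0" by simp
      then show ?thesis using \<open>q = 0\<close> False by simp
    qed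
  qed
  also have "\<dots> = (-1)^L * w ^ L" by (simp add: sum.delta)
  also have "\<dots> = (\<Prod>i<L. (1 - w * q^(2*i+1)) * (q^(2*i+1) - w))"
    using True by (simp add: power_mult_distrib[symmetric])
  finally show ?thesis .
next
  case qnz: False
  show ?thesis
  proof (cases L)
    case 0 then show ?thesis by simp
  next
    case (Suc l)
    define E where "E = (l+1)*(3*l+1)"
    define y where "y = q ^ (2*l+1)"
    have HB': "(\<Prod>i<2*L. y - w * q ^ (2*i))
       = (\<Sum>k\<le>2*L. qb (q^2) (2*L) k * (-1)^k * q ^ (k * (k - 1)) * w ^ k * y ^ (2*L - k))"
      by (rule HB)
    have "(\<Sum>k\<le>2*L. qb (q^2) (2*L) k * (-1)^k * q ^ (k * (k - 1)) * w ^ k * y ^ (2*L - k))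
        = q ^ E * (\<Sum>k\<le>2*L. (-1)^k * q ^ (nat ((int k - int L)^2)) * w ^ k * qb (q^2) (2*L) k)"
      unfolding sum_distrib_left
    proof (rule sum.cong[OF refl])
      fix k assume "k \<in> {..2*L}"
      then have k: "k \<le> 2*l+2" using Suc by simp
      have "q ^ (k * (k - 1)) * y ^ (2*L - k) = q ^ (k * (k - 1) + (2*l+1) * (2*l+2-k))"
      proof -
        have "2*L - k = 2*l+2-k" using Suc by simp
        then show ?thesis unfolding y_def by (simp only: power_add power_mult)
      qed
      also have "\<dots> = q ^ E * q ^ (nat ((int k - int L)^2))"
        unfolding exp_id[OF k] E_def Suc by (simp add: power_add mult_ac)
      finally have "q ^ (k * (k - 1)) * y ^ (2*L - k) = q ^ E * q ^ (nat ((int k - int L)^2))" .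
      note F = this
      have "qb (q^2) (2*L) k * (-1)^k * q ^ (k * (k - 1)) * w ^ k * y ^ (2*L - k)
          = (-1)^k * w ^ k * qb (q^2) (2*L) k * (q ^ (k * (k - 1)) * y ^ (2*L - k))"
        by (simp only: mult_ac)
      also have "\<dots> = q ^ E * ((-1)^k * q ^ (nat ((int k - int L)^2)) * w ^ k * qb (q^2) (2*L) k)"
        unfolding F by (simp only: mult_ac)
      finally show "qb (q^2) (2*L) k * (-1)^k * q ^ (k * (k - 1)) * w ^ k * y ^ (2*L - k)
          = q ^ E * ((-1)^k * q ^ (nat ((int k - int L)^2)) * w ^ k * qb (q^2) (2*L) k)" .
    qed
    moreover have "(\<Prod>i<2*L. y - w * q ^ (2*i)) = q ^ E * (\<Prod>i<L. (1 - w * q^(2*i+1)) * (q^(2*i+1) - w))"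
    proof -
      have "(\<Prod>i<2*L. y - w * q ^ (2*i)) = (\<Prod>i<L. y - w * q ^ (2*i)) * (\<Prod>i<L. y - w * q ^ (2*(L+i)))"
        using prod_split_add[of "\<lambda>i. y - w * q ^ (2*i)" L L] by (simp add: mult_2)
      also have "(\<Prod>i<L. y - w * q ^ (2*(L+i))) = (\<Prod>i<L. y * (1 - w * q^(2*i+1)))"
      proof (rule prod.cong[OF refl])
        fix i
        have "2*(L+i) = (2*l+1) + (2*i+1)" using Suc by simp
        then show "y - w * q ^ (2*(L+i)) = y * (1 - w * q^(2*i+1))"
          unfolding y_def by (simp add: power_add algebra_simps)
      qed
      also have "(\<Prod>i<L. y - w * q ^ (2*i)) = (\<Prod>i<L. y - w * q ^ (2*(L - Suc i)))"
        using prod.nat_diff_reindex[of "\<lambda>i. y - w * q ^ (2*i)" L] by simp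
      also have "\<dots> = (\<Prod>i<L. q ^ (2*(l-i)) * (q^(2*i+1) - w))"
      proof (rule prod.cong[OF refl])
        fix i assume "i \<in> {..<L}"
        then have i: "i \<le> l" using Suc by simp
        have "2*l+1 = 2*(l-i) + (2*i+1)" using i by simp
        then have "y = q ^ (2*(l-i)) * q^(2*i+1)" unfolding y_def by (simp only: power_add[symmetric])
        moreover have "L - Suc i = l - i" using Suc by simp
        ultimately show "y - w * q ^ (2*(L - Suc i)) = q ^ (2*(l-i)) * (q^(2*i+1) - w)"
          by (simp add: algebra_simps)
      qed
      also have "(\<Prod>i<L. q ^ (2*(l-i)) * (q^(2*i+1) - w)) * (\<Prod>i<L. y * (1 - w * q^(2*i+1)))
          = (q ^ (\<Sum>i<L. 2*(l-i)) * y ^ L) * (\<Prod>i<L. (1 - w * q^(2*i+1)) * (q^(2*i+1) - w))"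
        by (simp only: prod.distrib power_sum prod_constant card_lessThan mult_ac)
      also have "q ^ (\<Sum>i<L. 2*(l-i)) * y ^ L = q ^ E"
      proof -
        have "(\<Sum>i<L. 2*(l-i)) = L * (L - 1)"
          using sum_two_i[of L] Suc by simp
        then have "(\<Sum>i<L. 2*(l-i)) + (2*l+1) * L = E" unfolding E_def Suc by (simp add: algebra_simps)
        then show ?thesis unfolding y_def by (simp only: power_mult[symmetric] power_add[symmetric] mult.commute add.commute)
      qed
      finally show ?thesis .
    qed
    ultimately have "q ^ E * (\<Sum>k\<le>2*L. (-1)^k * q ^ (nat ((int k - int L)^2)) * w ^ k * qb (q^2) (2*L) k)
        = q ^ E * (\<Prod>i<L. (1 - w * q^(2*i+1)) * (q^(2*i+1) - w))" using HB' by simp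
    then show ?thesis using qnz by simp
  qed
qed

definition om :: complex where "om = Complex (-1/2) (sqrt 3 / 2)"

lemma om2: "om^2 + om + 1 = 0"
  by (simp add: om_def complex_eq_iff power2_eq_square)

lemma om3: "om^3 = 1"
proof -
  have "om^3 - 1 = (om - 1) * (om^2 + om + 1)" by (simp add: algebra_simps power2_eq_square power3_eq_cube)
  then show ?thesis using om2 by simp
qed

lemma om_pow_mod: "om ^ n = om ^ (n mod 3)"
proof -
  have "om ^ n = om ^ (3 * (n div 3) + n mod 3)" by simp
  also have "\<dots> = om ^ (n mod 3)" by (simp only: power_add power_mult om3) simp
  finally show ?thesis .
qed

lemma D_nz: "om - om^2 \<noteq> 0"
proof
  assume "om - om^2 = 0"
  then have "om^2 = om" by simp
  then have "2 * om + 1 = 0" using om2 by (simp add: algebra_simps)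
  moreover have "om = ((2 * om + 1) - 1) / 2" by simp
  ultimately have "om = -1/2" by simp
  then have "(-1/2::complex)^2 + (-1/2) + 1 = 0" using om2 by simp
  then show False by (simp add: power2_eq_square)
qed

lemma Legendre3: "Legendre m 3 = (if m mod 3 = 0 then 0 else if m mod 3 = 1 then 1 else -1)"
proof -
  have c0: "[m = 0] (mod 3) \<longleftrightarrow> m mod 3 = 0" by (simp add: cong_def)
  have q1: "m mod 3 = 1 \<Longrightarrow> QuadRes 3 m"
    unfolding QuadRes_def cong_def by (rule exI[of _ 1]) simp
  have q2: "m mod 3 = 2 \<Longrightarrow> \<not> QuadRes 3 m"
  proof
    assume m: "m mod 3 = 2" and "QuadRes 3 m"
    then obtain y where "y^2 mod 3 = m mod 3" unfolding QuadRes_def cong_def by blast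
    then have y: "((y mod 3)^2) mod 3 = 2" using m by (simp add: power_mod)
    have "y mod 3 = 0 \<or> y mod 3 = 1 \<or> y mod 3 = 2" by linarith
    then show False using y by (auto simp: power2_eq_square)
  qed
  have "m mod 3 = 0 \<or> m mod 3 = 1 \<or> m mod 3 = 2" by linarith
  then show ?thesis unfolding Legendre_def using c0 q1 q2 by auto
qed

lemma chi_om:
  assumes "int n1 mod 3 = m mod 3" "int n2 mod 3 = (2 * m) mod 3"
  shows "of_int (Legendre m 3) * (om - om^2) = om ^ n1 - om ^ n2"
proof -
  have "int (n1 mod 3) = m mod 3" using assms(1) by (simp add: zmod_int)
  then have "n1 mod 3 = nat (m mod 3)" by linarith
  then have e1: "om ^ n1 = om ^ nat (m mod 3)" using om_pow_mod[of n1] by simp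
  have "int (n2 mod 3) = (2*m) mod 3" using assms(2) by (simp add: zmod_int)
  then have "n2 mod 3 = nat ((2*m) mod 3)" by linarith
  then have e2: "om ^ n2 = om ^ nat ((2*m) mod 3)" using om_pow_mod[of n2] by simp
  have "m mod 3 = 0 \<or> m mod 3 = 1 \<or> m mod 3 = 2" by linarith
  moreover have "m mod 3 = 0 \<Longrightarrow> (2*m) mod 3 = 0" by presburger
  moreover have "m mod 3 = 1 \<Longrightarrow> (2*m) mod 3 = 2" by presburger
  moreover have "m mod 3 = 2 \<Longrightarrow> (2*m) mod 3 = 1" by presburger
  ultimately show ?thesis unfolding e1 e2 Legendre3 by (auto simp: numeral_2_eq_2)
qed

lemma neg1_abs: "(-1::complex) ^ (nat \<bar>int k - int L\<bar>) = (-1) ^ (k + L)"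
proof (cases "k \<ge> L")
  case True
  then have e: "nat \<bar>int k - int L\<bar> = k - L" "k + L = (k - L) + 2 * L" by auto
  show ?thesis unfolding e power_add power_mult by simp
next
  case False
  then have e: "nat \<bar>int k - int L\<bar> = L - k" "k + L = (L - k) + 2 * k" by auto
  show ?thesis unfolding e power_add power_mult by simp
qed

lemma fac_om: "(1 - om * a) * (a - om) = - om * (1 + a + a^2)"
proof -
  have "(1 - om * a) * (a - om) - (- om * (1 + a + a^2)) = a * (om^2 + om + 1)"
    by (simp add: algebra_simps power2_eq_square)
  also have "\<dots> = 0" using om2 by simp
  finally show ?thesis by (simp only: right_minus_eq)
qed

lemma fac_om2: "(1 - om^2 * a) * (a - om^2) = - (om^2) * (1 + a + a^2)"
proof -
  have "(1 - om^2 * a) * (a - om^2) - (- (om^2) * (1 + a + a^2)) = a * (1 + om^2 * om^2 + om^2)"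
    by (simp add: algebra_simps power2_eq_square)
  also have "om^2 * om^2 = om" using om3 by (simp add: power2_eq_square power3_eq_cube algebra_simps)
  also have "1 + om + om^2 = om^2 + om + 1" by (simp only: add_ac)
  also have "\<dots> = 0" by (rule om2)
  finally show ?thesis by (simp only: right_minus_eq mult_zero_right)
qed

lemma baseB:
  fixes q :: complex
  shows "(\<Sum>k\<le>2*L. (-1) ^ (nat \<bar>int k - int L\<bar>) * of_int (Legendre (int k - int L + 1) 3)
            * q ^ (nat ((int k - int L)^2)) * qb (q^2) (2*L) k)
       = (\<Prod>i<L. 1 + q^(2*i+1) + (q^(2*i+1))^2)"
proof -
  define S where "S = (\<Sum>k\<le>2*L. (-1) ^ (nat \<bar>int k - int L\<bar>) * of_int (Legendre (int k - int L + 1) 3)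
            * q ^ (nat ((int k - int L)^2)) * qb (q^2) (2*L) k)"
  define Pr where "Pr = (\<Prod>i<L. 1 + q^(2*i+1) + (q^(2*i+1))^2)"
  define T where "T w = (\<Sum>k\<le>2*L. (-1)^k * q ^ (nat ((int k - int L)^2)) * w ^ k * qb (q^2) (2*L) k)" for w
  have T1: "T om = (-om)^L * Pr"
    unfolding T_def TP Pr_def fac_om prod.distrib by simp
  have T2: "T (om^2) = (-(om^2))^L * Pr"
    unfolding T_def TP Pr_def fac_om2 prod.distrib by simp
  have "(om - om^2) * S = (-1)^L * (om^(1+2*L) * T om - om^(2+L) * T (om^2))"
    unfolding S_def T_def sum_distrib_left sum_subtractf[symmetric]
  proof (rule sum.cong[OF refl])
    fix k assume "k \<in> {..2*L}"
    have "of_int (Legendre (int k - int L + 1) 3) * (om - om^2) = om ^ (k+1+2*L) - om ^ (2*k+2+L)"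
      by (rule chi_om) presburger+
    note chi = this
    define X where "X = q ^ (nat ((int k - int L)^2)) * qb (q^2) (2*L) k"
    have pw1: "om^(1+2*L) * om^k = om^(k+1+2*L)" by (simp add: power_add[symmetric] add_ac)
    have pw2: "om^(2+L) * (om^2)^k = om^(2*k+2+L)" by (simp add: power_add[symmetric] power_mult[symmetric] add_ac mult_ac)
    have "(-1)^L * (om^(1+2*L) * ((-1)^k * q ^ (nat ((int k - int L)^2)) * om ^ k * qb (q^2) (2*L) k)
          - om^(2+L) * ((-1)^k * q ^ (nat ((int k - int L)^2)) * (om^2) ^ k * qb (q^2) (2*L) k))
        = (-1)^L * (-1)^k * X * (om^(1+2*L) * om^k - om^(2+L) * (om^2)^k)"
      unfolding X_def by (simp add: algebra_simps)
    also have "\<dots> = (-1)^L * (-1)^k * X * (of_int (Legendre (int k - int L + 1) 3) * (om - om^2))"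
      unfolding pw1 pw2 chi ..
    also have "\<dots> = (om - om^2) * ((-1) ^ (nat \<bar>int k - int L\<bar>) * of_int (Legendre (int k - int L + 1) 3)
            * q ^ (nat ((int k - int L)^2)) * qb (q^2) (2*L) k)"
      unfolding neg1_abs X_def power_add by (simp add: algebra_simps)
    finally show "(om - om^2) * ((-1) ^ (nat \<bar>int k - int L\<bar>) * of_int (Legendre (int k - int L + 1) 3)
            * q ^ (nat ((int k - int L)^2)) * qb (q^2) (2*L) k)
       = (-1)^L * (om^(1+2*L) * ((-1)^k * q ^ (nat ((int k - int L)^2)) * om ^ k * qb (q^2) (2*L) k)
          - om^(2+L) * ((-1)^k * q ^ (nat ((int k - int L)^2)) * (om^2) ^ k * qb (q^2) (2*L) k))" by simp
  qed
  also have "\<dots> = (om - om^2) * Pr"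
  proof -
    have "(-1)^L * (om^(1+2*L) * ((-om)^L * Pr) - om^(2+L) * ((-(om^2))^L * Pr))
        = (om * (om^3)^L - om^2 * (om^3)^L) * Pr"
    proof -
      have a1: "(-om)^L = (-1)^L * om^L" by (rule power_minus)
      have a2: "(-(om^2))^L = (-1)^L * (om^2)^L" by (rule power_minus)
      have a3: "(-1::complex)^L * (-1)^L = 1" by (simp add: power_mult_distrib[symmetric])
      have b1: "om^(1+2*L) * om^L = om * (om^3)^L"
        by (simp only: power_add[symmetric] power_mult[symmetric]) (simp add: algebra_simps)
      have b2: "om^(2+L) * (om^2)^L = om^2 * (om^3)^L"
        by (simp only: power_add[symmetric] power_mult[symmetric]) (simp add: algebra_simps)
      have "(-1)^L * (om^(1+2*L) * ((-om)^L * Pr) - om^(2+L) * ((-(om^2))^L * Pr))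
          = ((-1)^L * (-1)^L) * (om^(1+2*L) * om^L - om^(2+L) * (om^2)^L) * Pr"
        unfolding a1 a2 by (simp add: algebra_simps)
      then show ?thesis unfolding a3 b1 b2 by simp
    qed
    then show ?thesis unfolding T1 T2 om3 by simp
  qed
  finally have "(om - om^2) * S = (om - om^2) * Pr" .
  then show ?thesis using D_nz unfolding S_def Pr_def by simp
qed

definition Nf :: "nat \<Rightarrow> (nat \<Rightarrow> nat) \<Rightarrow> nat \<Rightarrow> nat" where
  "Nf v n i = (\<Sum>k = i..v. n k)"

definition W :: "complex \<Rightarrow> (nat \<Rightarrow> complex) \<Rightarrow> nat \<Rightarrow> (nat \<Rightarrow> nat) \<Rightarrow> complex" where
  "W x rat v n = x ^ (\<Sum>i = 1..v. (Nf v n i)^2) * (\<Prod>i = 1..<v. qinvfac x (int (n i)))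
                 * qinvfac x (int (2 * n v)) * rat (n v)"

definition E :: "nat \<Rightarrow> nat \<Rightarrow> (nat \<Rightarrow> nat) set" where
  "E v K = {n. (\<forall>i. (i < 1 \<or> i > v) \<longrightarrow> n i = 0) \<and> (\<forall>i. n i \<le> K)}"

fun Bf :: "complex \<Rightarrow> (nat \<Rightarrow> complex) \<Rightarrow> nat \<Rightarrow> nat \<Rightarrow> complex" where
  "Bf x rat 0 m = qinvfac x (int (2 * m)) * rat m"
| "Bf x rat (Suc v) L = (\<Sum>m\<le>L. qinvfac x (int L - int m) * x ^ (m^2) * Bf x rat v m)"

lemma finite_E: "finite (E v K)"
proof -
  have "E v K \<subseteq> {n. \<forall>i. (i \<in> {..v} \<longrightarrow> n i \<in> {..K}) \<and> (i \<notin> {..v} \<longrightarrow> n i = 0)}"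
    unfolding E_def by auto
  moreover have "finite {n. \<forall>i. (i \<in> {..v} \<longrightarrow> n i \<in> {..K}) \<and> (i \<notin> {..v} \<longrightarrow> n i = (0::nat))}"
    by (rule finite_set_of_finite_funs) auto
  ultimately show ?thesis by (rule finite_subset)
qed

lemma multi_base:
  "(\<Sum>n\<in>E 1 K. W x rat 1 n * g (Nf 1 n 1)) = (\<Sum>m\<le>K. x ^ (m^2) * Bf x rat 0 m * g m)"
proof (rule sum.reindex_bij_witness[where j = "\<lambda>n. n 1" and i = "\<lambda>m. (\<lambda>i. if i = 1 then m else 0)"])
  fix n assume n: "n \<in> E 1 K"
  show "(\<lambda>i. if i = 1 then n 1 else 0) = n"
  proof
    fix i show "(if i = 1 then n 1 else 0) = n i"
    proof (cases "i = 1")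
      case False then have "i < 1 \<or> 1 < i" by auto
      then show ?thesis using n False unfolding E_def by auto
    qed simp
  qed
  show "n 1 \<in> {..K}" using n unfolding E_def by auto
  show "x ^ ((n 1)^2) * Bf x rat 0 (n 1) * g (n 1) = W x rat 1 n * g (Nf 1 n 1)"
    unfolding W_def Nf_def by simp
next
  fix m assume "m \<in> {..K}"
  then show "(\<lambda>i. if i = 1 then m else 0) \<in> E 1 K" unfolding E_def by auto
qed simp

definition sh :: "(nat \<Rightarrow> nat) \<Rightarrow> nat \<Rightarrow> nat" where
  "sh n = (\<lambda>i. if i = 0 then 0 else n (Suc i))"

definition ins :: "nat \<Rightarrow> (nat \<Rightarrow> nat) \<Rightarrow> nat \<Rightarrow> nat" where
  "ins a n = (\<lambda>i. if i = 0 then 0 else if i = 1 then a else n (i - 1))"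

lemma Nf_sh:
  assumes "1 \<le> i"
  shows "Nf (Suc v) n (Suc i) = Nf v (sh n) i"
proof -
  have "Nf (Suc v) n (Suc i) = (\<Sum>k = i..v. n (Suc k))"
    unfolding Nf_def by (rule sum.shift_bounds_cl_Suc_ivl)
  also have "\<dots> = Nf v (sh n) i"
    unfolding Nf_def sh_def using assms by (intro sum.cong) auto
  finally show ?thesis .
qed

lemma Nf_1:
  "Nf (Suc v) n 1 = n 1 + Nf v (sh n) 1"
proof -
  have "Nf (Suc v) n 1 = n 1 + (\<Sum>k = Suc 1..Suc v. n k)"
    unfolding Nf_def by (simp add: sum.atLeast_Suc_atMost)
  also have "(\<Sum>k = Suc 1..Suc v. n k) = Nf (Suc v) n (Suc 1)" unfolding Nf_def ..
  also have "\<dots> = Nf v (sh n) 1" by (rule Nf_sh) simp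
  finally show ?thesis .
qed

lemma W_step:
  assumes "1 \<le> v"
  shows "W x rat (Suc v) n = x ^ ((n 1 + Nf v (sh n) 1)^2) * qinvfac x (int (n 1)) * W x rat v (sh n)"
proof -
  have s1: "(\<Sum>i = 1..Suc v. (Nf (Suc v) n i)^2) = (Nf (Suc v) n 1)^2 + (\<Sum>i = 1..v. (Nf v (sh n) i)^2)"
  proof -
    have "(\<Sum>i = 1..Suc v. (Nf (Suc v) n i)^2) = (Nf (Suc v) n 1)^2 + (\<Sum>i = Suc 1..Suc v. (Nf (Suc v) n i)^2)"
      by (simp add: sum.atLeast_Suc_atMost)
    also have "(\<Sum>i = Suc 1..Suc v. (Nf (Suc v) n i)^2) = (\<Sum>i = 1..v. (Nf (Suc v) n (Suc i))^2)"
      by (rule sum.shift_bounds_cl_Suc_ivl)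
    also have "\<dots> = (\<Sum>i = 1..v. (Nf v (sh n) i)^2)"
      by (intro sum.cong refl) (simp add: Nf_sh)
    finally show ?thesis .
  qed
  have p1: "(\<Prod>i = 1..<Suc v. qinvfac x (int (n i))) = qinvfac x (int (n 1)) * (\<Prod>i = 1..<v. qinvfac x (int (sh n i)))"
  proof -
    have "(\<Prod>i = 1..<Suc v. qinvfac x (int (n i))) = qinvfac x (int (n 1)) * (\<Prod>i = Suc 1..<Suc v. qinvfac x (int (n i)))"
      by (rule prod.atLeast_Suc_lessThan) (use assms in simp)
    also have "(\<Prod>i = Suc 1..<Suc v. qinvfac x (int (n i))) = (\<Prod>i = 1..<v. qinvfac x (int (n (Suc i))))"
      by (rule prod.shift_bounds_Suc_ivl)
    also have "\<dots> = (\<Prod>i = 1..<v. qinvfac x (int (sh n i)))"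
      by (intro prod.cong refl) (simp add: sh_def)
    finally show ?thesis .
  qed
  have e: "n (Suc v) = sh n v" using assms by (simp add: sh_def)
  show ?thesis unfolding W_def s1 p1 e Nf_1 by (simp add: power_add mult_ac)
qed

lemma shift_sum:
  fixes G :: "nat \<Rightarrow> complex"
  assumes "s \<le> K" "\<And>m. m < s \<Longrightarrow> G m = 0" "\<And>m. m > K \<Longrightarrow> G m = 0"
  shows "(\<Sum>a\<le>K. G (a + s)) = (\<Sum>m\<le>K. G m)"
proof -
  have "(\<Sum>a\<le>K. G (a + s)) = (\<Sum>m\<in>{0+s..K+s}. G m)"
    using sum.shift_bounds_cl_nat_ivl[of G 0 s K] by (simp add: atLeast0AtMost)
  also have "\<dots> = (\<Sum>m\<in>{..K+s}. G m)"
    by (rule sum.mono_neutral_left) (auto simp: assms(2))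
  also have "\<dots> = (\<Sum>m\<le>K. G m)"
    by (rule sum.mono_neutral_right) (auto simp: assms(3))
  finally show ?thesis .
qed

lemma ins_sh: "n \<in> E (Suc v) K \<Longrightarrow> ins (n 1) (sh n) = n"
proof
  fix i assume "n \<in> E (Suc v) K"
  then show "ins (n 1) (sh n) i = n i" unfolding ins_def sh_def E_def by auto
qed

lemma sh_E: "n \<in> E (Suc v) K \<Longrightarrow> sh n \<in> E v K"
  unfolding sh_def E_def by auto

lemma sh_ins: "n' \<in> E v K \<Longrightarrow> sh (ins a n') = n'"
proof
  fix i assume "n' \<in> E v K"
  then show "sh (ins a n') i = n' i" unfolding ins_def sh_def E_def by auto
qed

lemma ins_1[simp]: "ins a n' 1 = a"
  unfolding ins_def by simp

lemma E_le: "n \<in> E v K \<Longrightarrow> n i \<le> K"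
  unfolding E_def by auto

lemma ins_E: "a \<le> K \<Longrightarrow> n' \<in> E v K \<Longrightarrow> ins a n' \<in> E (Suc v) K"
  unfolding ins_def E_def by auto

lemma multi:
  assumes "1 \<le> v"
  shows "\<forall>g. (\<forall>s>K. g s = 0) \<longrightarrow>
    (\<Sum>n\<in>E v K. W x rat v n * g (Nf v n 1)) = (\<Sum>m\<le>K. x ^ (m^2) * Bf x rat (v - 1) m * g m)"
  using assms
proof (induction v rule: nat_induct_at_least)
  case base
  then show ?case using multi_base by simp
next
  case (Suc v)
  show ?case
  proof (intro allI impI)
    fix g :: "nat \<Rightarrow> complex" assume g0: "\<forall>s>K. g s = 0"
    have "(\<Sum>n\<in>E (Suc v) K. W x rat (Suc v) n * g (Nf (Suc v) n 1))
        = (\<Sum>(a, n')\<in>{..K} \<times> E v K. x ^ ((a + Nf v n' 1)^2) * qinvfac x (int a) * W x rat v n' * g (a + Nf v n' 1))"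
      apply (rule sum.reindex_bij_witness[where j = "\<lambda>n. (n 1, sh n)" and i = "\<lambda>(a, n'). ins a n'"])
      subgoal for n using ins_sh[of n v K] by simp
      subgoal by (simp add: sh_E E_le)
      subgoal for b using ins_1 by (cases b) (auto simp: sh_ins)
      subgoal for b by (cases b) (simp add: ins_E)
      subgoal for n unfolding W_step[OF Suc.hyps] Nf_1 by simp
      done
    also have "\<dots> = (\<Sum>a\<le>K. \<Sum>n'\<in>E v K. W x rat v n' * (x ^ ((a + Nf v n' 1)^2) * qinvfac x (int a) * g (a + Nf v n' 1)))"
      by (simp add: sum.cartesian_product mult_ac)
    also have "\<dots> = (\<Sum>a\<le>K. \<Sum>s\<le>K. x ^ (s^2) * Bf x rat (v - 1) s * (x ^ ((a + s)^2) * qinvfac x (int a) * g (a + s)))"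
    proof (rule sum.cong[OF refl])
      fix a
      have "\<forall>s>K. x ^ ((a + s)^2) * qinvfac x (int a) * g (a + s) = 0" using g0 by auto
      then show "(\<Sum>n'\<in>E v K. W x rat v n' * (x ^ ((a + Nf v n' 1)^2) * qinvfac x (int a) * g (a + Nf v n' 1)))
          = (\<Sum>s\<le>K. x ^ (s^2) * Bf x rat (v - 1) s * (x ^ ((a + s)^2) * qinvfac x (int a) * g (a + s)))"
        using Suc.IH[THEN spec, of "\<lambda>s. x ^ ((a + s)^2) * qinvfac x (int a) * g (a + s)"] by simp
    qed
    also have "\<dots> = (\<Sum>s\<le>K. x ^ (s^2) * Bf x rat (v - 1) s * (\<Sum>a\<le>K. x ^ ((a + s)^2) * qinvfac x (int (a + s) - int s) * g (a + s)))"
      by (subst sum.swap) (simp add: sum_distrib_left)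
    also have "\<dots> = (\<Sum>s\<le>K. x ^ (s^2) * Bf x rat (v - 1) s * (\<Sum>m\<le>K. x ^ (m^2) * qinvfac x (int m - int s) * g m))"
    proof (rule sum.cong[OF refl])
      fix s assume "s \<in> {..K}"
      then have "(\<Sum>a\<le>K. x ^ ((a + s)^2) * qinvfac x (int (a + s) - int s) * g (a + s))
          = (\<Sum>m\<le>K. x ^ (m^2) * qinvfac x (int m - int s) * g m)"
        by (intro shift_sum[where G = "\<lambda>m. x ^ (m^2) * qinvfac x (int m - int s) * g m"])
           (auto simp: g0 qinvfac_neg)
      then show "x ^ (s^2) * Bf x rat (v - 1) s * (\<Sum>a\<le>K. x ^ ((a + s)^2) * qinvfac x (int (a + s) - int s) * g (a + s))
          = x ^ (s^2) * Bf x rat (v - 1) s * (\<Sum>m\<le>K. x ^ (m^2) * qinvfac x (int m - int s) * g m)" by simp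
    qed
    also have "\<dots> = (\<Sum>m\<le>K. x ^ (m^2) * g m * (\<Sum>s\<le>K. qinvfac x (int m - int s) * x ^ (s^2) * Bf x rat (v - 1) s))"
      unfolding sum_distrib_left by (rule trans[OF sum.swap]) (simp add: mult_ac)
    also have "\<dots> = (\<Sum>m\<le>K. x ^ (m^2) * Bf x rat (Suc v - 1) m * g m)"
    proof (rule sum.cong[OF refl])
      fix m assume "m \<in> {..K}"
      then have "(\<Sum>s\<le>K. qinvfac x (int m - int s) * x ^ (s^2) * Bf x rat (v - 1) s)
          = (\<Sum>s\<le>m. qinvfac x (int m - int s) * x ^ (s^2) * Bf x rat (v - 1) s)"
        by (intro sum.mono_neutral_right) (auto simp: qinvfac_neg)
      also have "\<dots> = Bf x rat (Suc v - 1) m"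
        using Suc.hyps by (cases v) simp_all
      finally show "x ^ (m^2) * g m * (\<Sum>s\<le>K. qinvfac x (int m - int s) * x ^ (s^2) * Bf x rat (v - 1) s)
          = x ^ (m^2) * Bf x rat (Suc v - 1) m * g m" by simp
    qed
    finally show "(\<Sum>n\<in>E (Suc v) K. W x rat (Suc v) n * g (Nf (Suc v) n 1))
        = (\<Sum>m\<le>K. x ^ (m^2) * Bf x rat (Suc v - 1) m * g m)" .
  qed
qed

definition ratq :: "complex \<Rightarrow> nat \<Rightarrow> complex" where
  "ratq q m = qpoch (q^3) (q^6) m / qpoch q (q^2) m"

definition av :: "complex \<Rightarrow> nat \<Rightarrow> int \<Rightarrow> complex" where
  "av q v j = (-1) ^ nat \<bar>j\<bar> * of_int (Legendre (j + 1) 3) * q ^ ((2 * v + 1) * nat (j^2))"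

lemma ratq_prod:
  assumes q: "norm q < 1"
  shows "ratq q L = (\<Prod>i<L. 1 + q^(2*i+1) + (q^(2*i+1))^2)"
proof -
  have "ratq q L = (\<Prod>i<L. (1 - q^3 * (q^6)^i) / (1 - q * (q^2)^i))"
    unfolding ratq_def qpoch_def prod_dividef ..
  also have "\<dots> = (\<Prod>i<L. 1 + q^(2*i+1) + (q^(2*i+1))^2)"
  proof (rule prod.cong[OF refl])
    fix i
    define a where "a = q^(2*i+1)"
    have e1: "q * (q^2)^i = a" unfolding a_def by (simp add: power_mult[symmetric])
    have e2: "q^3 * (q^6)^i = a^3"
    proof -
      have "q^3 * (q^6)^i = q^(3 + 6*i)" by (simp add: power_mult[symmetric] power_add)
      also have "3 + 6*i = (2*i+1)*3" by simp
      finally show ?thesis unfolding a_def by (simp only: power_mult)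
    qed
    have nz: "1 - a \<noteq> 0" unfolding a_def using one_minus_pow_nz[OF q, of "2*i+1"] by simp
    have "1 - a^3 = (1 - a) * (1 + a + a^2)" by (simp add: algebra_simps power2_eq_square power3_eq_cube)
    then show "(1 - q^3 * (q^6)^i) / (1 - q * (q^2)^i) = 1 + q^(2*i+1) + (q^(2*i+1))^2"
      unfolding e1 e2 using nz by (simp add: a_def)
  qed
  finally show ?thesis .
qed

lemma normx: fixes q :: complex shows "norm q < 1 \<Longrightarrow> norm (q^2) < 1"
proof -
  assume "norm q < 1"
  then have "norm q ^ 2 < 1 ^ 2" by (intro power_strict_mono) auto
  then show ?thesis by (simp add: norm_power)
qed

lemma baileyC:
  assumes q: "norm q < 1"
  shows "Bf (q^2) (ratq q) v L = (\<Sum>j\<in>{-int L..int L}. av q v j * qinvfac (q^2) (int L + j) * qinvfac (q^2) (int L - j))"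
proof (induction v arbitrary: L)
  case 0
  define x where "x = q^2"
  have x: "norm x < 1" unfolding x_def using normx[OF q] .
  define c where "c k = (-1) ^ (nat \<bar>int k - int L\<bar>) * of_int (Legendre (int k - int L + 1) 3)
            * q ^ (nat ((int k - int L)^2))" for k
  define Pr where "Pr = (\<Prod>i<L. 1 + q^(2*i+1) + (q^(2*i+1))^2)"
  have "Pr = (\<Sum>k\<le>2*L. c k * qb x (2*L) k)"
    unfolding Pr_def c_def x_def by (rule baseB[symmetric])
  also have "\<dots> = qpoch x x (2*L) * (\<Sum>k\<le>2*L. c k * ipn x k * ipn x (2*L - k))"
    unfolding sum_distrib_left by (rule sum.cong[OF refl]) (simp add: qb_ipn[OF x] mult_ac)
  finally have "ipn x (2*L) * Pr = (\<Sum>k\<le>2*L. c k * ipn x k * ipn x (2*L - k))"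
    using qpx_nz[OF x, of "2*L"] by (simp add: ipn_def)
  moreover have "Bf x (ratq q) 0 L = ipn x (2*L) * Pr"
    unfolding Bf.simps qinvfac_nat ratq_prod[OF q] Pr_def ..
  moreover have "(\<Sum>j\<in>{-int L..int L}. av q 0 j * qinvfac x (int L + j) * qinvfac x (int L - j))
      = (\<Sum>k\<le>2*L. c k * ipn x k * ipn x (2*L - k))"
  proof (rule sum.reindex_bij_witness[where i = "\<lambda>k. int k - int L" and j = "\<lambda>j. nat (j + int L)"])
    fix j assume "j \<in> {-int L..int L}"
    then have j: "- int L \<le> j" "j \<le> int L" by auto
    define k where "k = nat (j + int L)"
    have hk: "int k = j + int L" using j unfolding k_def by simp
    have k2: "int (2*L - k) = int L - j" using j hk by linarith
    show "int (nat (j + int L)) - int L = j" using j by simp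
    show "nat (j + int L) \<in> {..2*L}" using j by simp
    have "c k * ipn x k * ipn x (2*L - k) = av q 0 j * qinvfac x (int L + j) * qinvfac x (int L - j)"
    proof -
      have "int k - int L = j" using hk by simp
      moreover have "qinvfac x (int L + j) = ipn x k" using hk by (metis add.commute qinvfac_nat)
      moreover have "qinvfac x (int L - j) = ipn x (2*L - k)" using k2 by (metis qinvfac_nat)
      ultimately show ?thesis unfolding c_def av_def by simp
    qed
    then show "c (nat (j + int L)) * ipn x (nat (j + int L)) * ipn x (2*L - nat (j + int L))
        = av q 0 j * qinvfac x (int L + j) * qinvfac x (int L - j)" unfolding k_def .
  next
    fix k assume "k \<in> {..2*L}"
    then show "nat (int k - int L + int L) = k" "int k - int L \<in> {-int L..int L}" by auto
  qed
  ultimately show ?case unfolding x_def by simp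
next
  case (Suc v)
  define x where "x = q^2"
  have x: "norm x < 1" unfolding x_def using normx[OF q] .
  define qf where "qf = qinvfac x"
  have "Bf x (ratq q) (Suc v) L = (\<Sum>m\<le>L. qinvfac x (int L - int m) * x ^ (m^2) * Bf x (ratq q) v m)"
    by simp
  also have "\<dots> = (\<Sum>m\<le>L. \<Sum>j\<in>{-int L..int L}. qf (int L - int m) * x ^ (m^2) * (av q v j * qf (int m + j) * qf (int m - j)))"
  proof (rule sum.cong[OF refl])
    fix m assume "m \<in> {..L}"
    then have m: "m \<le> L" by simp
    have "Bf x (ratq q) v m = (\<Sum>j\<in>{-int m..int m}. av q v j * qf (int m + j) * qf (int m - j))"
      using Suc.IH unfolding x_def qf_def .
    also have "\<dots> = (\<Sum>j\<in>{-int L..int L}. av q v j * qf (int m + j) * qf (int m - j))"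
      by (rule sum.mono_neutral_left) (use m in \<open>auto simp: qf_def qinvfac_neg\<close>)
    finally show "qinvfac x (int L - int m) * x ^ (m^2) * Bf x (ratq q) v m
        = (\<Sum>j\<in>{-int L..int L}. qf (int L - int m) * x ^ (m^2) * (av q v j * qf (int m + j) * qf (int m - j)))"
      by (simp add: sum_distrib_left qf_def)
  qed
  also have "\<dots> = (\<Sum>j\<in>{-int L..int L}. av q v j * (\<Sum>m\<le>L. qf (int L - int m) * x ^ (m^2) * qf (int m + j) * qf (int m - j)))"
    unfolding sum_distrib_left by (rule trans[OF sum.swap]) (simp add: mult_ac)
  also have "\<dots> = (\<Sum>j\<in>{-int L..int L}. av q v j * (x ^ (nat (j^2)) * qf (int L + j) * qf (int L - j)))"
    unfolding qf_def baileyA[OF x] ..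
  also have "\<dots> = (\<Sum>j\<in>{-int L..int L}. av q (Suc v) j * qf (int L + j) * qf (int L - j))"
  proof (rule sum.cong[OF refl])
    fix j
    have "q ^ ((2 * v + 1) * nat (j^2)) * x ^ (nat (j^2)) = q ^ ((2 * Suc v + 1) * nat (j^2))"
      unfolding x_def by (simp add: power_mult[symmetric] power_add[symmetric] algebra_simps)
    then show "av q v j * (x ^ (nat (j^2)) * qf (int L + j) * qf (int L - j)) = av q (Suc v) j * qf (int L + j) * qf (int L - j)"
      unfolding av_def by (simp add: mult_ac)
  qed
  finally show ?case unfolding x_def qf_def .
qed

theorem mainTheorem13:
  fixes q :: complex and v L :: nat
  assumes "norm q < 1" and "v \<ge> 1"
  defines "qt \<equiv> q ^ 2"
  shows "infsum (\<lambda>n :: nat \<Rightarrow> nat.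
            let N = (\<lambda>i. \<Sum>k = i..v. n k) in
            qt ^ (\<Sum>i = 1..v. (N i)^2)
            * (\<Prod>i = 1..<v. qinvfac qt (int (n i)))
            * qinvfac qt (int (2 * n v))
            * (qpoch (q^3) (q^6) (n v) / qpoch q (q^2) (n v))
            * qpoch qt qt (2 * L) * qinvfac qt (int L - int (N 1)))
          {n. \<forall>i. (i < 1 \<or> i > v) \<longrightarrow> n i = 0}
       = infsum (\<lambda>j :: int. (-1) ^ nat \<bar>j\<bar> * of_int (Legendre (j + 1) 3)
            * q ^ ((2 * v + 1) * nat (j^2)) * qbinom qt (2 * int L) (int L + j)) UNIV"
proof -
  note q = assms(1)
  have x: "norm qt < 1" unfolding qt_def using normx[OF q] .
  define f where "f = (\<lambda>n :: nat \<Rightarrow> nat.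
            let N = (\<lambda>i. \<Sum>k = i..v. n k) in
            qt ^ (\<Sum>i = 1..v. (N i)^2)
            * (\<Prod>i = 1..<v. qinvfac qt (int (n i)))
            * qinvfac qt (int (2 * n v))
            * (qpoch (q^3) (q^6) (n v) / qpoch q (q^2) (n v))
            * qpoch qt qt (2 * L) * qinvfac qt (int L - int (N 1)))"
  define h where "h = (\<lambda>j :: int. (-1) ^ nat \<bar>j\<bar> * of_int (Legendre (j + 1) 3)
            * q ^ ((2 * v + 1) * nat (j^2)) * qbinom qt (2 * int L) (int L + j))"
  define g where "g s = qpoch qt qt (2 * L) * qinvfac qt (int L - int s)" for s
  define PL where "PL = qpoch qt qt (2 * L)"
  define Sig where "Sig = (\<Sum>j\<in>{-int L..int L}. av q v j * qinvfac qt (int L + j) * qinvfac qt (int L - j))"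
  have fW: "f n = W qt (ratq q) v n * g (Nf v n 1)" for n
    unfolding f_def W_def g_def Nf_def ratq_def Let_def by (simp add: mult_ac)
  have "infsum f {n. \<forall>i. (i < 1 \<or> i > v) \<longrightarrow> n i = 0} = infsum f (E v L)"
  proof (rule infsum_cong_neutral)
    fix n assume "n \<in> E v L - {n. \<forall>i. (i < 1 \<or> i > v) \<longrightarrow> n i = 0}"
    then show "f n = 0" unfolding E_def by auto
  next
    fix n assume n: "n \<in> {n. \<forall>i. (i < 1 \<or> i > v) \<longrightarrow> n i = 0} - E v L"
    then obtain i where i: "n i > L" unfolding E_def by (auto simp: not_le)
    then have "1 \<le> i \<and> i \<le> v" using n by (metis (mono_tags, lifting) Diff_iff le_zero_eq mem_Collect_eq not_le not_less0 less_one)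
    then have "n i \<le> Nf v n 1" unfolding Nf_def by (intro member_le_sum) auto
    then have "int L - int (Nf v n 1) < 0" using i by linarith
    then show "f n = 0" unfolding fW g_def by (simp add: qinvfac_neg)
  qed simp
  also have "\<dots> = (\<Sum>n\<in>E v L. W qt (ratq q) v n * g (Nf v n 1))"
    using finite_E by (simp add: fW)
  also have "\<dots> = (\<Sum>m\<le>L. qt ^ (m^2) * Bf qt (ratq q) (v - 1) m * g m)"
  proof -
    have "\<forall>s>L. g s = 0" unfolding g_def by (auto simp: qinvfac_neg)
    then show ?thesis using multi[OF assms(2)] by blast
  qed
  also have "\<dots> = PL * Bf qt (ratq q) v L"
  proof -
    obtain u where u: "v = Suc u" using assms(2) by (cases v) auto
    show ?thesis unfolding u g_def PL_def by (simp add: sum_distrib_left mult_ac)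
  qed
  also have "\<dots> = PL * Sig"
    unfolding Sig_def qt_def using baileyC[OF q] by simp
  finally have LHS: "infsum f {n. \<forall>i. (i < 1 \<or> i > v) \<longrightarrow> n i = 0} = PL * Sig" .
  have "infsum h UNIV = infsum h {-int L..int L}"
  proof (rule infsum_cong_neutral)
    fix j assume "j \<in> UNIV - {-int L..int L}"
    then have "\<not> (0 \<le> int L + j \<and> int L + j \<le> 2 * int L)" by auto
    then have "qbinom qt (2 * int L) (int L + j) = 0" unfolding qbinom_def by (rule if_not_P)
    then show "h j = 0" unfolding h_def by simp
  qed simp_all
  also have "\<dots> = (\<Sum>j\<in>{-int L..int L}. h j)" by simp
  also have "\<dots> = PL * Sig"
    unfolding Sig_def sum_distrib_left
  proof (rule sum.cong[OF refl])
    fix j assume "j \<in> {-int L..int L}"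
    then have j: "0 \<le> int L + j" "int L + j \<le> 2 * int L" by auto
    have "qbinom qt (2 * int L) (int L + j) = PL * qinvfac qt (int L + j) * qinvfac qt (int L - j)"
    proof -
      have "nat (2 * int L) = 2 * L" by simp
      moreover have "2 * int L - (int L + j) = int L - j" by simp
      ultimately show ?thesis unfolding qbinom_def PL_def qinvfac_def using j by simp
    qed
    then show "h j = PL * (av q v j * qinvfac qt (int L + j) * qinvfac qt (int L - j))"
      unfolding h_def av_def by (simp add: mult_ac)
  qed
  finally show ?thesis using LHS unfolding f_def h_def by simp
qed

end
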